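(* Let $f:\mathbb{Z}^n\to\mathbb{R}\cup\{+\infty\}$ be M-convex, $\emptyset\neq R\subsetneq N$, and $y\in\operatorname{dom} f$. Let $i\in R$ satisfy $f'(y;i,j)>\phi^R(y)$ for every $j\in N\setminus R$, and let $h\in R$, $k\in N\setminus R$ satisfy $f'(y;h,k)=\phi^R(y)$. Then $f'(y+\chi_h-\chi_k;i,j)>\phi^R(y)$ for every $j\in N\setminus R$.
   Context: $N=\{1,\dots,n\}$; $\chi_i\in\{0,1\}^n$ is the $i$-th unit vector. For $f:\mathbb{Z}^n\to\mathbb{R}\cup\{+\infty\}$, $\operatorname{dom} f=\{x\in\mathbb{Z}^n: f(x)<+\infty\}$. $f$ is M-convex if $\operatorname{dom} f\neq\emptyset$ and for all $x,y\in\operatorname{dom} f$ and every $i$ with $x(i)>y(i)$ there is $j$ with $x(j)<y(j)$ such that $f(x)+f(y)\ge f(x-\chi_i+\chi_j)+f(y+\chi_i-\chi_j)$. $f'(x;i,j)=f(x+\chi_i-\chi_j)-f(x)$ (possibly $+\infty$), and $\phi^R(x)=\min_{i\in R,\,j\in N\setminus R}f'(x;i,j)$. *)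

theory Defs
  imports "HOL-Library.Extended_Real" "HOL-Library.Function_Algebras"
begin

text \<open>Integer vectors in Z^n are modelled as functions from a finite index type 'n
  (playing the role of N) to int. Values in R \<union> {+\<infinity>} are ereals (never -\<infinity>).\<close>

definition unitv :: "'n \<Rightarrow> ('n \<Rightarrow> int)" where
  "unitv i = (\<lambda>j. if j = i then 1 else 0)"

definition effdom :: "(('n \<Rightarrow> int) \<Rightarrow> ereal) \<Rightarrow> ('n \<Rightarrow> int) set" where
  "effdom f = {x. f x < \<infinity>}"

definition M_convex :: "(('n \<Rightarrow> int) \<Rightarrow> ereal) \<Rightarrow> bool" where
  "M_convex f \<longleftrightarrow> effdom f \<noteq> {} \<and>
     (\<forall>x\<in>effdom f. \<forall>y\<in>effdom f. \<forall>i. x i > y i \<longrightarrow>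
        (\<exists>j. x j < y j \<and>
           f x + f y \<ge> f (x - unitv i + unitv j) + f (y + unitv i - unitv j)))"

definition fder :: "(('n \<Rightarrow> int) \<Rightarrow> ereal) \<Rightarrow> ('n \<Rightarrow> int) \<Rightarrow> 'n \<Rightarrow> 'n \<Rightarrow> ereal" where
  "fder f x i j = f (x + unitv i - unitv j) - f x"

definition phiR :: "(('n::finite \<Rightarrow> int) \<Rightarrow> ereal) \<Rightarrow> 'n set \<Rightarrow> ('n \<Rightarrow> int) \<Rightarrow> ereal" where
  "phiR f R x = Min ((\<lambda>(i, j). fder f x i j) ` (R \<times> (UNIV - R)))"

end

theory Submission
  imports Defs
begin

lemma phiR_le:
  fixes f :: "('n::finite \<Rightarrow> int) \<Rightarrow> ereal"
  assumes "a \<in> R" "b \<notin> R"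
  shows "phiR f R y \<le> fder f y a b"
  unfolding phiR_def
  by (rule Min_le) (use assms in force)+

theorem mainTheorem10:
  fixes f :: "('n::finite \<Rightarrow> int) \<Rightarrow> ereal"
    and R :: "'n set" and y :: "'n \<Rightarrow> int" and i h k :: 'n
  assumes fin_vals: "\<forall>x. f x \<noteq> -\<infinity>"
    and M: "M_convex f"
    and R_ne: "R \<noteq> {}" and R_proper: "R \<noteq> UNIV"
    and y_dom: "y \<in> effdom f"
    and i_R: "i \<in> R"
    and i_gt: "\<forall>j\<in>UNIV - R. fder f y i j > phiR f R y"
    and h_R: "h \<in> R" and k_nR: "k \<in> UNIV - R"
    and hk: "fder f y h k = phiR f R y"
  shows "\<forall>j\<in>UNIV - R. fder f (y + unitv h - unitv k) i j > phiR f R y"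
proof
  fix j assume jR: "j \<in> UNIV - R"
  define y' where "y' = y + unitv h - unitv k"
  define z where "z = y' + unitv i - unitv j"
  obtain c where c: "f y = ereal c"
    using y_dom fin_vals unfolding effdom_def by (cases "f y") auto
  have "f y' \<noteq> \<infinity>"
  proof
    assume "f y' = \<infinity>"
    hence "phiR f R y = \<infinity>" using hk c unfolding fder_def y'_def by simp
    thus False using i_gt k_nR by auto
  qed
  then obtain d where d: "f y' = ereal d" using fin_vals by (cases "f y'") auto
  define p where "p = d - c"
  have phi: "phiR f R y = ereal p" using hk c d unfolding fder_def y'_def p_def by simp
  have hi: "h \<noteq> i"
  proof
    assume "h = i"
    hence "fder f y i k = phiR f R y" using hk by simp
    moreover have "fder f y i k > phiR f R y" using i_gt k_nR by blast
    ultimately show False by simp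
  qed
  have ik: "i \<noteq> k" "i \<noteq> j" using i_R k_nR jR by auto
  have goal_eq: "fder f (y + unitv h - unitv k) i j = f z - ereal d"
    unfolding fder_def z_def y'_def using d y'_def by simp
  show "fder f (y + unitv h - unitv k) i j > phiR f R y"
  proof (cases "f z")
    case PInf
    thus ?thesis using goal_eq phi by simp
  next
    case MInf thus ?thesis using fin_vals by auto
  next
    case (real e)
    have zdom: "z \<in> effdom f" using real unfolding effdom_def by simp
    have zi: "z i > y i" using hi ik unfolding z_def y'_def unitv_def by simp
    obtain l where l: "z l < y l"
      and ex: "f z + f y \<ge> f (z - unitv i + unitv l) + f (y + unitv i - unitv l)"
      using M zdom y_dom zi unfolding M_convex_def by blast
    have lR: "l \<notin> R"
    proof
      assume "l \<in> R" hence "l \<noteq> k" "l \<noteq> j" using k_nR jR by auto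
      thus False using l unfolding z_def y'_def unitv_def by (auto split: if_splits)
    qed
    have lkj: "l = k \<or> l = j" using l unfolding z_def y'_def unitv_def by (auto split: if_splits)
    obtain m where m: "m \<notin> R" "z - unitv i + unitv l = y + unitv h - unitv m"
    proof (cases "l = k")
      case True
      show ?thesis by (rule that[of j]) (use jR True in \<open>auto simp: z_def y'_def algebra_simps\<close>)
    next
      case False
      hence "l = j" using lkj by simp
      show ?thesis by (rule that[of k]) (use k_nR \<open>l = j\<close> in \<open>auto simp: z_def y'_def algebra_simps\<close>)
    qed
    have A: "fder f y h m \<ge> ereal p" using phiR_le[OF h_R m(1), of f y] phi by simp
    have B: "fder f y i l > ereal p" using i_gt lR phi by auto
    obtain a where a: "f (y + unitv h - unitv m) = ereal a"
      using fin_vals ex real c m(2) by (cases "f (y + unitv h - unitv m)") auto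
    obtain b where b: "f (y + unitv i - unitv l) = ereal b"
      using fin_vals ex real c m(2) a by (cases "f (y + unitv i - unitv l)") auto
    have "a - c \<ge> p" using A a c unfolding fder_def by simp
    moreover have "b - c > p" using B b c unfolding fder_def by simp
    moreover have "e + c \<ge> a + b" using ex real c a b m(2) by simp
    ultimately have "e - d > p" unfolding p_def by linarith
    thus ?thesis using goal_eq real phi by simp
  qed
qed

end
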